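(* Let $\mu$ be a Borel probability measure on $[0,1]$ and let $(v_k)_{k=1}^M\subseteq[0,1]$ with $M\in\mathbb{N}\cup\{\infty\}$. Then there exists $(x_k)_{k=1}^M\subseteq[0,1]$ such that for all integers $2\leq N\leq M$, $$D^*_N\Big(\mu;\tfrac1N\textstyle\sum_{i=1}^N\delta_{x_i}\Big)\leq D^*_N\Big(\lambda_1;\tfrac1N\textstyle\sum_{i=1}^N\delta_{v_i}\Big).$$ Moreover, if $\mu$ has no point masses (i.e. $\mu(\{x\})=0$ for every $x\in[0,1]$), then equality holds for all such $N$.
   Context: $\lambda_1$ is Lebesgue measure on $[0,1]$ and $\delta_y$ the Dirac measure at $y$. For probability measures $\mu,\nu$ on $[0,1]$, the star-discrepancy is $D^*_N(\mu;\nu)=\sup_{b\in[0,1]}|\mu([0,b))-\nu([0,b))|$ (supremum over half-open intervals anchored at $0$). *)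

theory Defs
  imports "HOL-Probability.Probability"
begin

definition emp_meas :: "(nat \<Rightarrow> real) \<Rightarrow> nat \<Rightarrow> real set \<Rightarrow> real" where
  "emp_meas x N A = real (card {i \<in> {1..N}. x i \<in> A}) / real N"

definition star_disc :: "(real set \<Rightarrow> real) \<Rightarrow> (nat \<Rightarrow> real) \<Rightarrow> nat \<Rightarrow> real" where
  "star_disc m x N = (SUP b\<in>{0..1}. \<bar>m {0..<b} - emp_meas x N {0..<b}\<bar>)"

end

theory Submission
  imports Defs
begin

lemma in_sets_mu:
  assumes S: "sets \<mu> = sets (restrict_space borel {0..1::real})"
    and "A \<subseteq> {0..1}" "A \<in> sets borel"
  shows "A \<in> sets \<mu>"
  using assms by (simp add: sets_restrict_space_iff)

lemma left_cont:
  assumes P: "prob_space \<mu>" and S: "sets \<mu> = sets (restrict_space borel {0..1::real})"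
    and b: "0 < b" "b \<le> 1"
  shows "(\<lambda>n. measure \<mu> {0..<b - 1 / real (Suc n)}) \<longlonglongrightarrow> measure \<mu> {0..<b}"
proof -
  interpret prob_space \<mu> by fact
  let ?A = "\<lambda>n. {0..<b - 1 / real (Suc n)}"
  have pos: "0 \<le> 1 / real (Suc n)" for n by simp
  have "?A n \<in> sets \<mu>" for n
  proof (rule in_sets_mu[OF S])
    show "?A n \<subseteq> {0..1}"
    proof
      fix y assume "y \<in> ?A n"
      then have "0 \<le> y" "y < b - 1 / real (Suc n)" by auto
      moreover have "y \<le> 1" using calculation b pos[of n] by linarith
      ultimately show "y \<in> {0..1}" by simp
    qed
  qed auto
  then have "range ?A \<subseteq> sets \<mu>" by auto
  moreover have "incseq ?A"
    by (auto simp: incseq_def intro!: diff_left_mono frac_le elim: less_le_trans)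
  ultimately have "(\<lambda>n. measure \<mu> (?A n)) \<longlonglongrightarrow> measure \<mu> (\<Union>n. ?A n)"
    by (rule finite_Lim_measure_incseq)
  moreover have "(\<Union>n. ?A n) = {0..<b}"
  proof (intro equalityI subsetI)
    fix x assume "x \<in> {0..<b}"
    then have x: "0 \<le> x" "x < b" by auto
    then obtain n where "1 / real (Suc n) < b - x"
      using reals_Archimedean[of "b - x"] by (auto simp: inverse_eq_divide)
    then have "x < b - 1 / real (Suc n)" by linarith
    then have "x \<in> ?A n" using x by simp
    then show "x \<in> (\<Union>n. ?A n)" by blast
  next
    fix x assume "x \<in> (\<Union>n. ?A n)"
    then obtain n where "x \<in> ?A n" by blast
    then have "0 \<le> x" "x < b - 1 / real (Suc n)" by auto
    moreover have "0 \<le> 1 / real (Suc n)" by simp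
    ultimately have "0 \<le> x" "x < b" by linarith+
    then show "x \<in> {0..<b}" by simp
  qed
  ultimately show ?thesis by simp
qed

lemma right_lim:
  assumes P: "prob_space \<mu>" and S: "sets \<mu> = sets (restrict_space borel {0..1::real})"
    and b: "0 \<le> b" "b < 1"
  shows "(\<lambda>n. measure \<mu> {0..<min 1 (b + 1 / real (Suc n))}) \<longlonglongrightarrow> measure \<mu> {0..b}"
proof -
  interpret prob_space \<mu> by fact
  let ?A = "\<lambda>n. {0..<min 1 (b + 1 / real (Suc n))}"
  have "range ?A \<subseteq> sets \<mu>" using b by (auto intro!: in_sets_mu[OF S])
  moreover have "decseq ?A"
    unfolding decseq_def
  proof (intro allI impI subsetI)
    fix m n x assume "m \<le> n" "x \<in> ?A n"
    moreover have "1 / real (Suc n) \<le> 1 / real (Suc m)" using \<open>m \<le> n\<close>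
      by (intro frac_le) auto
    ultimately show "x \<in> ?A m" by auto
  qed
  ultimately have "(\<lambda>n. measure \<mu> (?A n)) \<longlonglongrightarrow> measure \<mu> (\<Inter>n. ?A n)"
    by (rule finite_Lim_measure_decseq)
  moreover have "(\<Inter>n. ?A n) = {0..b}"
  proof (intro equalityI subsetI)
    fix x assume x: "x \<in> (\<Inter>n. ?A n)"
    have x0: "0 \<le> x" using x by auto
    have "x \<le> b"
    proof (rule ccontr)
      assume "\<not> x \<le> b"
      then obtain n where "1 / real (Suc n) < x - b"
        using reals_Archimedean[of "x - b"] by (auto simp: inverse_eq_divide)
      moreover have "x \<in> ?A n" using x by blast
      ultimately show False by auto
    qed
    then show "x \<in> {0..b}" using x0 by simp
  next
    fix x assume "x \<in> {0..b}"
    then have x: "0 \<le> x" "x \<le> b" by auto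
    have "x \<in> ?A n" for n
    proof -
      have "0 < 1 / real (Suc n)" by simp
      then have "x < b + 1 / real (Suc n)" using x by linarith
      then show "x \<in> ?A n" using x b by (simp del: of_nat_Suc)
    qed
    then show "x \<in> (\<Inter>n. ?A n)" by blast
  qed
  ultimately show ?thesis by simp
qed

lemma abs_le1: "0 \<le> (p::real) \<Longrightarrow> p \<le> 1 \<Longrightarrow> 0 \<le> q \<Longrightarrow> q \<le> 1 \<Longrightarrow> \<bar>p - q\<bar> \<le> 1"
  by auto

lemma emp_bounds: "0 < N \<Longrightarrow> 0 \<le> emp_meas x N A \<and> emp_meas x N A \<le> 1"
proof -
  assume N: "0 < N"
  have "card {i \<in> {1..N}. x i \<in> A} \<le> card {1..N}" by (intro card_mono) auto
  then have "real (card {i \<in> {1..N}. x i \<in> A}) \<le> real N" by simp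
  then show ?thesis using N unfolding emp_meas_def by (simp add: field_simps)
qed

theorem lemma3p3:
  fixes \<mu> :: "real measure" and v :: "nat \<Rightarrow> real" and M :: enat
  assumes "prob_space \<mu>"
    and "sets \<mu> = sets (restrict_space borel {0..1})"
    and "\<And>k. 1 \<le> k \<Longrightarrow> enat k \<le> M \<Longrightarrow> v k \<in> {0..1}"
  shows "\<exists>x :: nat \<Rightarrow> real.
           (\<forall>k. 1 \<le> k \<and> enat k \<le> M \<longrightarrow> x k \<in> {0..1}) \<and>
           (\<forall>N. 2 \<le> N \<and> enat N \<le> M \<longrightarrow>
               star_disc (measure \<mu>) x N \<le> star_disc (measure lborel) v N) \<and>
           ((\<forall>y\<in>{0..1}. measure \<mu> {y} = 0) \<longrightarrow>
              (\<forall>N. 2 \<le> N \<and> enat N \<le> M \<longrightarrow>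
               star_disc (measure \<mu>) x N = star_disc (measure lborel) v N))"
proof -
  note P = assms(1) and S = assms(2)
  interpret prob_space \<mu> by fact
  define F where "F b = measure \<mu> {0..<b}" for b :: real
  define T where "T w = {t\<in>{0..1}. w < F t}" for w
  define xf where "xf w = (if T w = {} then 1 else Inf (T w))" for w
  have F0: "F b = 0" if "b \<le> 0" for b using that by (simp add: F_def)
  have Fmono: "F a \<le> F b" if "a \<le> b" "b \<le> 1" for a b
    unfolding F_def using that by (intro finite_measure_mono in_sets_mu[OF S]) auto
  have Frange: "0 \<le> F b \<and> F b \<le> 1" for b unfolding F_def by (simp add: prob_le_1)
  have xf01: "xf w \<in> {0..1}" for w
  proof (cases "T w = {}")
    case False
    have "0 \<le> Inf (T w) \<and> Inf (T w) \<le> 1"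
    proof
      show "0 \<le> Inf (T w)" by (rule cInf_greatest[OF False]) (auto simp: T_def)
      obtain t where "t \<in> T w" using False by auto
      then have "Inf (T w) \<le> t" by (intro cInf_lower) (auto simp: T_def intro: bdd_belowI[of _ 0])
      then show "Inf (T w) \<le> 1" using \<open>t \<in> T w\<close> by (auto simp: T_def)
    qed
    then show ?thesis using False by (simp add: xf_def)
  qed (simp add: xf_def)
  have bddT: "bdd_below (T w)" for w by (rule bdd_belowI[of _ 0]) (auto simp: T_def)
  have key: "xf w < b \<longleftrightarrow> w < F b" if w: "0 \<le> w" and b: "b \<in> {0..1}" for w b
  proof
    assume "xf w < b"
    then have ne: "T w \<noteq> {}" using b by (auto simp: xf_def split: if_splits)
    then have "Inf (T w) < b" using \<open>xf w < b\<close> by (simp add: xf_def)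
    then obtain t where t: "t \<in> T w" "t < b" using cInf_less_iff[OF ne bddT] by auto
    then have "w < F t" by (simp add: T_def)
    also have "F t \<le> F b" using t b by (intro Fmono) auto
    finally show "w < F b" .
  next
    assume wF: "w < F b"
    have "b > 0" using wF w F0[of b] b by (cases "b > 0") auto
    then have "(\<lambda>n. F (b - 1 / real (Suc n))) \<longlonglongrightarrow> F b"
      unfolding F_def using left_cont[OF P S] b by auto
    from order_tendstoD(1)[OF this wF] obtain n where n: "w < F (b - 1 / real (Suc n))"
      by (auto dest: eventually_happens)
    let ?t = "b - 1 / real (Suc n)"
    have "?t \<ge> 0" using n w F0[of ?t] by (cases "?t \<ge> 0") auto
    moreover have "?t \<le> 1" using b by (simp add: diff_le_eq add_increasing2)
    ultimately have tT: "?t \<in> T w" using n b by (auto simp: T_def)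
    then have "T w \<noteq> {}" by auto
    then have "xf w \<le> ?t" using tT bddT by (simp add: xf_def cInf_lower)
    also have "?t < b" by simp
    finally show "xf w < b" .
  qed
  define x where "x k = xf (v k)" for k
  have empeq: "emp_meas x N {0..<b} = emp_meas v N {0..<F b}"
    if N: "enat N \<le> M" and b: "b \<in> {0..1}" for N b
  proof -
    have "{i \<in> {1..N}. x i \<in> {0..<b}} = {i \<in> {1..N}. v i \<in> {0..<F b}}"
    proof (intro Collect_cong conj_cong refl)
      fix i assume i: "i \<in> {1..N}"
      then have "enat i \<le> enat N" by simp
      then have vi: "v i \<in> {0..1}" using assms(3)[of i] N i
        by (meson atLeastAtMost_iff order_trans)
      show "x i \<in> {0..<b} \<longleftrightarrow> v i \<in> {0..<F b}"
        using key[of "v i" b] vi b xf01[of "v i"] by (auto simp: x_def)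
    qed
    then show ?thesis by (simp add: emp_meas_def)
  qed
  have bddL: "bdd_above ((\<lambda>a. \<bar>measure lborel {0..<a} - emp_meas v N {0..<a}\<bar>) ` {0..1})"
    if "0 < N" for N
    using emp_bounds[OF that, of v] by (intro bdd_aboveI[of _ 1]) (auto intro!: abs_le1)
  have bddR: "bdd_above ((\<lambda>b. \<bar>measure \<mu> {0..<b} - emp_meas x N {0..<b}\<bar>) ` {0..1})"
    if "0 < N" for N
    using emp_bounds[OF that, of x] by (intro bdd_aboveI[of _ 1]) (auto intro!: abs_le1)
  have ineq: "star_disc (measure \<mu>) x N \<le> star_disc (measure lborel) v N"
    if N: "2 \<le> N" "enat N \<le> M" for N
    unfolding star_disc_def
  proof (rule cSUP_least)
    fix b :: real assume b: "b \<in> {0..1}"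
    have "\<bar>measure \<mu> {0..<b} - emp_meas x N {0..<b}\<bar>
        = \<bar>measure lborel {0..<F b} - emp_meas v N {0..<F b}\<bar>"
      using empeq[OF N(2) b] Frange[of b] by (simp add: F_def)
    also have "\<dots> \<le> (SUP a\<in>{0..1}. \<bar>measure lborel {0..<a} - emp_meas v N {0..<a}\<bar>)"
      using Frange[of b] N by (intro cSUP_upper bddL) auto
    finally show "\<bar>measure \<mu> {0..<b} - emp_meas x N {0..<b}\<bar>
        \<le> (SUP a\<in>{0..1}. \<bar>measure lborel {0..<a} - emp_meas v N {0..<a}\<bar>)" .
  qed simp
  have surj: "\<exists>b\<in>{0..1}. F b = a"
    if na: "\<forall>y\<in>{0..1}. measure \<mu> {y} = 0" and a: "a \<in> {0..1}" for a
  proof -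
    have F1: "F 1 = 1"
    proof -
      have sp: "space \<mu> = {0..1}"
        using sets_eq_imp_space_eq[OF S] by simp
      have "measure \<mu> {0..1} = measure \<mu> {0..<1} + measure \<mu> {1}"
        by (subst finite_measure_Union[symmetric]) (auto intro!: in_sets_mu[OF S] arg_cong[where f="measure \<mu>"])
      then show ?thesis using na prob_space sp by (simp add: F_def)
    qed
    define b where "b = xf a"
    have b01: "b \<in> {0..1}" using xf01 by (simp add: b_def)
    have below: "F t \<le> a" if "t \<in> {0..1}" "t < b" for t
      using key[of a t] that a by (auto simp: b_def)
    have above: "a < F t" if "t \<in> {0..1}" "b < t" for t
      using key[of a t] that a by (auto simp: b_def)
    have le: "F b \<le> a"
    proof (cases "b = 0")
      case True then show ?thesis using F0[of b] a by simp
    next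
      case False
      then have "(\<lambda>n. F (b - 1 / real (Suc n))) \<longlonglongrightarrow> F b"
        unfolding F_def using left_cont[OF P S] b01 by auto
      then show ?thesis
      proof (rule LIMSEQ_le_const2)
        show "\<exists>N. \<forall>n\<ge>N. F (b - 1 / real (Suc n)) \<le> a"
        proof (intro exI allI impI)
          fix n
          show "F (b - 1 / real (Suc n)) \<le> a"
          proof (cases "b - 1 / real (Suc n) \<ge> 0")
            case True
            have p: "0 < 1 / real (Suc n)" by simp
            have "b \<le> 1" using b01 by simp
            then have "b - 1 / real (Suc n) \<le> 1" using p by linarith
            then show ?thesis using b01 True by (intro below) auto
          next
            case False then show ?thesis using F0 a by simp
          qed
        qed
      qed
    qed
    have ge: "a \<le> F b"
    proof (cases "b = 1")
      case True then show ?thesis using F1 a by simp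
    next
      case False
      then have b1: "b < 1" using b01 by simp
      have "(\<lambda>n. F (min 1 (b + 1 / real (Suc n)))) \<longlonglongrightarrow> measure \<mu> {0..b}"
        unfolding F_def using right_lim[OF P S] b01 b1 by auto
      moreover have "measure \<mu> {0..b} = F b"
      proof -
        have "{0..b} = {0..<b} \<union> {b}" using b01 by auto
        moreover have "measure \<mu> ({0..<b} \<union> {b}) = measure \<mu> {0..<b} + measure \<mu> {b}"
          using b01 by (intro finite_measure_Union in_sets_mu[OF S]) auto
        ultimately have "measure \<mu> {0..b} = measure \<mu> {0..<b} + measure \<mu> {b}" by simp
        then show ?thesis using na b01 by (simp add: F_def)
      qed
      ultimately have lim: "(\<lambda>n. F (min 1 (b + 1 / real (Suc n)))) \<longlonglongrightarrow> F b" by simp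
      show ?thesis
      proof (rule LIMSEQ_le_const[OF lim])
        show "\<exists>N. \<forall>n\<ge>N. a \<le> F (min 1 (b + 1 / real (Suc n)))"
        proof (intro exI allI impI)
          fix n
          have "0 < 1 / real (Suc n)" by simp
          then show "a \<le> F (min 1 (b + 1 / real (Suc n)))"
            using b01 b1 by (intro less_imp_le above) auto
        qed
      qed
    qed
    show ?thesis using le ge b01 by (intro bexI[of _ b]) auto
  qed
  have eq: "star_disc (measure \<mu>) x N = star_disc (measure lborel) v N"
    if na: "\<forall>y\<in>{0..1}. measure \<mu> {y} = 0" and N: "2 \<le> N" "enat N \<le> M" for N
  proof (rule antisym[OF ineq[OF N]])
    show "star_disc (measure lborel) v N \<le> star_disc (measure \<mu>) x N"
      unfolding star_disc_def
    proof (rule cSUP_least)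
      fix a :: real assume a: "a \<in> {0..1}"
      obtain b where b: "b \<in> {0..1}" "F b = a" using surj[OF na a] by auto
      have "\<bar>measure lborel {0..<a} - emp_meas v N {0..<a}\<bar>
          = \<bar>measure \<mu> {0..<b} - emp_meas x N {0..<b}\<bar>"
        using empeq[OF N(2) b(1)] b a by (simp add: F_def)
      also have "\<dots> \<le> (SUP b\<in>{0..1}. \<bar>measure \<mu> {0..<b} - emp_meas x N {0..<b}\<bar>)"
        using b N by (intro cSUP_upper bddR) auto
      finally show "\<bar>measure lborel {0..<a} - emp_meas v N {0..<a}\<bar>
          \<le> (SUP b\<in>{0..1}. \<bar>measure \<mu> {0..<b} - emp_meas x N {0..<b}\<bar>)" .
    qed simp
  qed
  have xa: "0 \<le> xf w" "xf w \<le> 1" for w using xf01[of w] by auto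
  show ?thesis
    by (intro exI[of _ x] conjI allI impI) (auto simp: x_def xa intro: ineq eq)
qed

end
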